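(* Let $A$, $c$, $B$ be as in the context. (i) A vector $u\in\mathbb N^n$ lies in $\mathcal O_c$ if and only if $Q_u\cap\mathbb Z^{n-d}=\{0\}$. (ii) If $u\in\mathcal O_c$ and $\tau$ is a face of $\Delta_c$, then the group relaxation $G^\tau(Au)$ solves $IP_{A,c}(Au)$ if and only if $Q_u^{\bar\tau}\cap\mathbb Z^{n-d}=\{0\}$.
   Context: $A\in\mathbb Z^{d\times n}$ has rank $d$, columns $a_1,\dots,a_n$, $cone(A)$ pointed, $\{x\in\mathbb R^n_{\ge0}:Ax=0\}=\{0\}$, $\mathbb ZA=\mathbb Z^d$, $\mathbb NA=\{Au:u\in\mathbb N^n\}$. For $c\in\mathbb Z^n$ and $b\in\mathbb NA$, $IP_{A,c}(b)=\min\{c\cdot x: Ax=b,\ x\in\mathbb N^n\}$. The regular triangulation $\Delta_c$ is the collection of $\sigma\subseteq\{1,\dots,n\}$ for which some $y\in\mathbb R^d$ has $y\cdot a_j=c_j$ ($j\in\sigma$), $y\cdot a_j<c_j$ ($j\notin\sigma$). $c$ is generic: $\Delta_c$ is a triangulation and every $IP_{A,c}(b)$, $b\in\mathbb NA$, has a unique optimal solution. $\mathcal O_c\subseteq\mathbb N^n$ is the set of optimal solutions of all $IP_{A,c}(b)$, $b\in\mathbb NA$. For a maximal face $\sigma$ of $\Delta_c$ let $\tilde c_{\bar\sigma}=c_{\bar\sigma}-c_\sigma A_\sigma^{-1}A_{\bar\sigma}$, and for a face $\tau\subseteq\sigma$ let $\tilde c_{\bar\tau}$ be its extension by zeros to $\mathbb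 R^{|\bar\tau|}$. The group relaxation $G^\tau(b)$ is $\min\{\tilde c_{\bar\tau}\cdot x_{\bar\tau}: A_\tau x_\tau+A_{\bar\tau}x_{\bar\tau}=b,\ x_{\bar\tau}\ge0,\ (x_\tau,x_{\bar\tau})\in\mathbb Z^n\}$; it solves $IP_{A,c}(b)$ if its optimal solution is non-negative. $B\in\mathbb Z^{n\times(n-d)}$ has columns forming a basis of $\{x\in\mathbb Z^n:Ax=0\}$; $B^{\bar\tau}$ deletes the rows of $B$ indexed by $\tau$, and $\pi_\tau:\mathbb R^n\to\mathbb R^{|\bar\tau|}$ deletes coordinates indexed by $\tau$. $Q_u=\{z\in\mathbb R^{n-d}: Bz\le u,\ (-cB)z\le0\}$ and $Q_u^{\bar\tau}=\{z\in\mathbb R^{n-d}: B^{\bar\tau}z\le\pi_\tau(u),\ (-cB)z\le0\}$. *)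

theory Defs
  imports Complex_Main
begin

text \<open>Dimensions d, n vary, so vectors are functions on nat that vanish
outside their index range {..<k}; the matrix A is a function A i j (row i < d, column j < n);
the lattice basis B is a function B j k (row j < n, column k < n-d).
Coordinates are 0-based: the index set {1,...,n} of the paper is {..<n}.\<close>

definition rvecs :: "nat \<Rightarrow> (nat \<Rightarrow> real) set" where
  "rvecs k = {x. \<forall>j\<ge>k. x j = 0}"

definition zvecs :: "nat \<Rightarrow> (nat \<Rightarrow> int) set" where
  "zvecs k = {x. \<forall>j\<ge>k. x j = 0}"

definition nvecs :: "nat \<Rightarrow> (nat \<Rightarrow> int) set" where
  "nvecs k = {x \<in> zvecs k. \<forall>j<k. 0 \<le> x j}"

definition zlat :: "nat \<Rightarrow> (nat \<Rightarrow> real) set" where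
  "zlat k = {z \<in> rvecs k. \<forall>i. z i \<in> \<int>}"

definition mv :: "nat \<Rightarrow> nat \<Rightarrow> (nat \<Rightarrow> nat \<Rightarrow> 'a::comm_ring_1) \<Rightarrow> (nat \<Rightarrow> 'a) \<Rightarrow> nat \<Rightarrow> 'a" where
  "mv m p M x = (\<lambda>i. if i < m then (\<Sum>j<p. M i j * x j) else 0)"

definition realA :: "(nat \<Rightarrow> nat \<Rightarrow> int) \<Rightarrow> nat \<Rightarrow> nat \<Rightarrow> real" where
  "realA A = (\<lambda>i j. real_of_int (A i j))"

definition ycol :: "nat \<Rightarrow> (nat \<Rightarrow> nat \<Rightarrow> int) \<Rightarrow> (nat \<Rightarrow> real) \<Rightarrow> nat \<Rightarrow> real" where
  "ycol d A y j = (\<Sum>i<d. y i * real_of_int (A i j))"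

definition rank_eq_rows :: "nat \<Rightarrow> nat \<Rightarrow> (nat \<Rightarrow> nat \<Rightarrow> int) \<Rightarrow> bool" where
  "rank_eq_rows d n A \<longleftrightarrow> (\<forall>v \<in> rvecs d. \<exists>x \<in> rvecs n. v = mv d n (realA A) x)"

definition cone_cols :: "nat \<Rightarrow> (nat \<Rightarrow> nat \<Rightarrow> int) \<Rightarrow> nat set \<Rightarrow> (nat \<Rightarrow> real) set" where
  "cone_cols d A S = {v. \<exists>l. (\<forall>j\<in>S. 0 \<le> l j) \<and>
      v = (\<lambda>i. if i < d then (\<Sum>j\<in>S. l j * real_of_int (A i j)) else 0)}"

definition pointed_cone :: "(nat \<Rightarrow> real) set \<Rightarrow> bool" where
  "pointed_cone K \<longleftrightarrow> (\<forall>v. v \<in> K \<and> (\<lambda>i. - v i) \<in> K \<longrightarrow> v = (\<lambda>_. 0))"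

definition lin_indep_cols :: "nat \<Rightarrow> (nat \<Rightarrow> nat \<Rightarrow> int) \<Rightarrow> nat set \<Rightarrow> bool" where
  "lin_indep_cols d A S \<longleftrightarrow> (\<forall>l. (\<forall>i<d. (\<Sum>j\<in>S. l j * real_of_int (A i j)) = 0) \<longrightarrow> (\<forall>j\<in>S. l j = 0))"

definition NA :: "nat \<Rightarrow> nat \<Rightarrow> (nat \<Rightarrow> nat \<Rightarrow> int) \<Rightarrow> (nat \<Rightarrow> int) set" where
  "NA d n A = mv d n A ` nvecs n"

definition cdot :: "nat \<Rightarrow> (nat \<Rightarrow> 'a::comm_ring_1) \<Rightarrow> (nat \<Rightarrow> 'a) \<Rightarrow> 'a" where
  "cdot n c x = (\<Sum>j<n. c j * x j)"

definition IP_opt :: "nat \<Rightarrow> nat \<Rightarrow> (nat \<Rightarrow> nat \<Rightarrow> int) \<Rightarrow> (nat \<Rightarrow> int) \<Rightarrow> (nat \<Rightarrow> int) \<Rightarrow> (nat \<Rightarrow> int) \<Rightarrow> bool" where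
  "IP_opt d n A c b x \<longleftrightarrow> x \<in> nvecs n \<and> mv d n A x = b \<and>
     (\<forall>x' \<in> nvecs n. mv d n A x' = b \<longrightarrow> cdot n c x \<le> cdot n c x')"

definition Oc :: "nat \<Rightarrow> nat \<Rightarrow> (nat \<Rightarrow> nat \<Rightarrow> int) \<Rightarrow> (nat \<Rightarrow> int) \<Rightarrow> (nat \<Rightarrow> int) set" where
  "Oc d n A c = {x. \<exists>b \<in> NA d n A. IP_opt d n A c b x}"

text \<open>the regular triangulation \<open>\<Delta>_c\<close> (as a collection of subsets of {..<n})\<close>
definition Delta :: "nat \<Rightarrow> nat \<Rightarrow> (nat \<Rightarrow> nat \<Rightarrow> int) \<Rightarrow> (nat \<Rightarrow> int) \<Rightarrow> nat set set" where
  "Delta d n A c = {\<sigma>. \<sigma> \<subseteq> {..<n} \<and> (\<exists>y \<in> rvecs d.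
       (\<forall>j\<in>\<sigma>. ycol d A y j = real_of_int (c j)) \<and>
       (\<forall>j\<in>{..<n} - \<sigma>. ycol d A y j < real_of_int (c j)))}"

definition is_triangulation :: "nat \<Rightarrow> nat \<Rightarrow> (nat \<Rightarrow> nat \<Rightarrow> int) \<Rightarrow> nat set set \<Rightarrow> bool" where
  "is_triangulation d n A T \<longleftrightarrow> T \<noteq> {} \<and>
     (\<forall>\<sigma>\<in>T. \<sigma> \<subseteq> {..<n} \<and> lin_indep_cols d A \<sigma>) \<and>
     (\<forall>\<sigma>\<in>T. \<forall>\<tau>. \<tau> \<subseteq> \<sigma> \<longrightarrow> \<tau> \<in> T) \<and>
     (\<Union>\<sigma>\<in>T. cone_cols d A \<sigma>) = cone_cols d A {..<n} \<and>
     (\<forall>\<sigma>\<in>T. \<forall>\<tau>\<in>T. cone_cols d A \<sigma> \<inter> cone_cols d A \<tau> = cone_cols d A (\<sigma> \<inter> \<tau>))"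

definition generic :: "nat \<Rightarrow> nat \<Rightarrow> (nat \<Rightarrow> nat \<Rightarrow> int) \<Rightarrow> (nat \<Rightarrow> int) \<Rightarrow> bool" where
  "generic d n A c \<longleftrightarrow> is_triangulation d n A (Delta d n A c) \<and>
     (\<forall>b \<in> NA d n A. \<exists>!x. IP_opt d n A c b x)"

definition maximal_face :: "nat set set \<Rightarrow> nat set \<Rightarrow> bool" where
  "maximal_face T \<sigma> \<longleftrightarrow> \<sigma> \<in> T \<and> (\<forall>\<rho>\<in>T. \<sigma> \<subseteq> \<rho> \<longrightarrow> \<rho> = \<sigma>)"

text \<open>\<open>c_\<sigma> A_\<sigma>^{-1}\<close>: the unique \<open>y \<in> \<real>^d\<close> with \<open>y \<cdot> a_j = c_j\<close> for \<open>j \<in> \<sigma>\<close>\<close>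
definition ysig :: "nat \<Rightarrow> (nat \<Rightarrow> nat \<Rightarrow> int) \<Rightarrow> (nat \<Rightarrow> int) \<Rightarrow> nat set \<Rightarrow> nat \<Rightarrow> real" where
  "ysig d A c \<sigma> = (THE y. y \<in> rvecs d \<and> (\<forall>j\<in>\<sigma>. ycol d A y j = real_of_int (c j)))"

text \<open>\<open>\<tilde>c\<close>: for \<open>j \<notin> \<sigma>\<close> it is \<open>c_j - c_\<sigma> A_\<sigma>^{-1} a_j\<close>; extended by zeros on \<open>\<sigma>\<close>
  (so on \<open>\<sigma> - \<tau>\<close> when used as \<open>\<tilde>c_{\<bar>\<tau>}\<close>)\<close>
definition ctilde :: "nat \<Rightarrow> (nat \<Rightarrow> nat \<Rightarrow> int) \<Rightarrow> (nat \<Rightarrow> int) \<Rightarrow> nat set \<Rightarrow> nat \<Rightarrow> real" where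
  "ctilde d A c \<sigma> j = (if j \<in> \<sigma> then 0 else real_of_int (c j) - ycol d A (ysig d A c \<sigma>) j)"

definition G_feas :: "nat \<Rightarrow> nat \<Rightarrow> (nat \<Rightarrow> nat \<Rightarrow> int) \<Rightarrow> nat set \<Rightarrow> (nat \<Rightarrow> int) \<Rightarrow> (nat \<Rightarrow> int) set" where
  "G_feas d n A \<tau> b = {x \<in> zvecs n. mv d n A x = b \<and> (\<forall>j\<in>{..<n} - \<tau>. 0 \<le> x j)}"

definition G_obj :: "nat \<Rightarrow> nat \<Rightarrow> (nat \<Rightarrow> nat \<Rightarrow> int) \<Rightarrow> (nat \<Rightarrow> int) \<Rightarrow> nat set \<Rightarrow> nat set \<Rightarrow> (nat \<Rightarrow> int) \<Rightarrow> real" where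
  "G_obj d n A c \<sigma> \<tau> x = (\<Sum>j\<in>{..<n} - \<tau>. ctilde d A c \<sigma> j * real_of_int (x j))"

definition G_opt :: "nat \<Rightarrow> nat \<Rightarrow> (nat \<Rightarrow> nat \<Rightarrow> int) \<Rightarrow> (nat \<Rightarrow> int) \<Rightarrow> nat set \<Rightarrow> nat set \<Rightarrow> (nat \<Rightarrow> int) \<Rightarrow> (nat \<Rightarrow> int) \<Rightarrow> bool" where
  "G_opt d n A c \<sigma> \<tau> b x \<longleftrightarrow> x \<in> G_feas d n A \<tau> b \<and>
     (\<forall>x' \<in> G_feas d n A \<tau> b. G_obj d n A c \<sigma> \<tau> x \<le> G_obj d n A c \<sigma> \<tau> x')"

text \<open>\<open>G^\<tau>(b)\<close> solves \<open>IP_{A,c}(b)\<close>: it has an optimal solution, and its optimal solution is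
  non-negative (stated for every optimal solution).\<close>
definition G_solves :: "nat \<Rightarrow> nat \<Rightarrow> (nat \<Rightarrow> nat \<Rightarrow> int) \<Rightarrow> (nat \<Rightarrow> int) \<Rightarrow> nat set \<Rightarrow> nat set \<Rightarrow> (nat \<Rightarrow> int) \<Rightarrow> bool" where
  "G_solves d n A c \<sigma> \<tau> b \<longleftrightarrow> (\<exists>x. G_opt d n A c \<sigma> \<tau> b x) \<and>
     (\<forall>x. G_opt d n A c \<sigma> \<tau> b x \<longrightarrow> x \<in> nvecs n)"

definition lattice_basis :: "nat \<Rightarrow> nat \<Rightarrow> (nat \<Rightarrow> nat \<Rightarrow> int) \<Rightarrow> (nat \<Rightarrow> nat \<Rightarrow> int) \<Rightarrow> bool" where
  "lattice_basis d n A B \<longleftrightarrow>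
     (\<forall>z \<in> zvecs (n - d). mv d n A (mv n (n - d) B z) = (\<lambda>_. 0)) \<and>
     (\<forall>x \<in> zvecs n. mv d n A x = (\<lambda>_. 0) \<longrightarrow> (\<exists>z \<in> zvecs (n - d). x = mv n (n - d) B z)) \<and>
     (\<forall>z \<in> zvecs (n - d). mv n (n - d) B z = (\<lambda>_. 0) \<longrightarrow> z = (\<lambda>_. 0))"

text \<open>\<open>Q_u^{\<bar>\<tau>}\<close>; with \<open>\<tau> = {}\<close> this is \<open>Q_u\<close>\<close>
definition Qtau :: "nat \<Rightarrow> nat \<Rightarrow> (nat \<Rightarrow> int) \<Rightarrow> (nat \<Rightarrow> nat \<Rightarrow> int) \<Rightarrow> nat set \<Rightarrow> (nat \<Rightarrow> int) \<Rightarrow> (nat \<Rightarrow> real) set" where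
  "Qtau d n c B \<tau> u = {z \<in> rvecs (n - d).
     (\<forall>j\<in>{..<n} - \<tau>. (\<Sum>k<n - d. real_of_int (B j k) * z k) \<le> real_of_int (u j)) \<and>
     - (\<Sum>j<n. real_of_int (c j) * (\<Sum>k<n - d. real_of_int (B j k) * z k)) \<le> 0}"

definition Q :: "nat \<Rightarrow> nat \<Rightarrow> (nat \<Rightarrow> int) \<Rightarrow> (nat \<Rightarrow> nat \<Rightarrow> int) \<Rightarrow> (nat \<Rightarrow> int) \<Rightarrow> (nat \<Rightarrow> real) set" where
  "Q d n c B u = {z \<in> rvecs (n - d).
     (\<forall>j<n. (\<Sum>k<n - d. real_of_int (B j k) * z k) \<le> real_of_int (u j)) \<and>
     - (\<Sum>j<n. real_of_int (c j) * (\<Sum>k<n - d. real_of_int (B j k) * z k)) \<le> 0}"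

end

theory Submission
  imports Defs
begin

lemma mv_diff: "mv m p M (\<lambda>j. x j - x' j) = (\<lambda>i. mv m p M x i - mv m p M x' i)"
  unfolding mv_def by (auto simp: sum_subtractf algebra_simps)

lemma cdot_diff: "cdot n c (\<lambda>j. x j - x' j) = cdot n c x - cdot n c x'"
  unfolding cdot_def by (auto simp: sum_subtractf algebra_simps)

lemma ycol_lin: "ycol d A (\<lambda>i. y i + t * w i) j = ycol d A y j + t * ycol d A w j"
  unfolding ycol_def by (simp add: sum.distrib sum_distrib_left algebra_simps)

lemma ycol_diff: "ycol d A (\<lambda>i. y i - w i) j = ycol d A y j - ycol d A w j"
  unfolding ycol_def by (simp add: sum_subtractf algebra_simps)

lemma ycol_neg: "ycol d A (\<lambda>i. - w i) j = - ycol d A w j"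
  unfolding ycol_def by (simp add: sum_negf)

lemma ysig_prop:
  assumes rank: "rank_eq_rows d n A" and mf: "maximal_face (Delta d n A c) \<sigma>"
  shows "\<forall>j\<in>\<sigma>. ycol d A (ysig d A c \<sigma>) j = real_of_int (c j)"
proof -
  have sD: "\<sigma> \<in> Delta d n A c" using mf unfolding maximal_face_def by auto
  then obtain y0 where y0: "y0 \<in> rvecs d" "\<forall>j\<in>\<sigma>. ycol d A y0 j = real_of_int (c j)"
     "\<forall>j\<in>{..<n} - \<sigma>. ycol d A y0 j < real_of_int (c j)" and ssub: "\<sigma> \<subseteq> {..<n}"
    unfolding Delta_def by auto
  have no_up: False if w: "w \<in> rvecs d" "\<forall>j\<in>\<sigma>. ycol d A w j = 0" "j0 < n" "ycol d A w j0 > 0" for w j0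
  proof -
    define S where "S = {j. j < n \<and> ycol d A w j > 0}"
    define f where "f j = (real_of_int (c j) - ycol d A y0 j) / ycol d A w j" for j
    define t where "t = Min (f ` S)"
    have finS: "finite S" unfolding S_def by auto
    have neS: "S \<noteq> {}" using w unfolding S_def by auto
    have Sns: "j \<notin> \<sigma>" if "j \<in> S" for j using that w(2) unfolding S_def by force
    have fpos: "f j > 0" if "j \<in> S" for j
      using that Sns[OF that] y0(3) unfolding S_def f_def by auto
    have "t \<in> f ` S" using Min_in[of "f ` S"] finS neS unfolding t_def by auto
    then obtain js where js: "js \<in> S" "f js = t" by auto
    have tle: "t \<le> f j" if "j \<in> S" for j using that finS unfolding t_def by auto
    have tpos: "t > 0" using fpos js by auto
    define y' where "y' = (\<lambda>i. y0 i + t * w i)"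
    have y'r: "y' \<in> rvecs d" using y0(1) w(1) unfolding rvecs_def y'_def by auto
    have ycy: "ycol d A y' j = ycol d A y0 j + t * ycol d A w j" for j
      unfolding y'_def by (rule ycol_lin)
    have le: "ycol d A y' j \<le> real_of_int (c j)" if "j < n" for j
    proof (cases "j \<in> S")
      case True
      then have "t * ycol d A w j \<le> real_of_int (c j) - ycol d A y0 j"
        using tle[OF True] unfolding f_def S_def by (simp add: pos_le_divide_eq mult.commute)
      then show ?thesis using ycy by simp
    next
      case False
      then have "ycol d A w j \<le> 0" using that unfolding S_def by auto
      then have "t * ycol d A w j \<le> 0" using tpos by (simp add: mult_nonneg_nonpos)
      moreover have "ycol d A y0 j \<le> real_of_int (c j)"
        using y0(2,3) that by (cases "j \<in> \<sigma>") force+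
      ultimately show ?thesis using ycy by simp
    qed
    define \<sigma>' where "\<sigma>' = {j. j < n \<and> ycol d A y' j = real_of_int (c j)}"
    have "\<sigma>' \<in> Delta d n A c"
      unfolding Delta_def
    proof (intro CollectI conjI bexI[of _ y'] ballI)
      show "\<sigma>' \<subseteq> {..<n}" unfolding \<sigma>'_def by auto
      show "y' \<in> rvecs d" by (rule y'r)
      fix j assume "j \<in> \<sigma>'" then show "ycol d A y' j = real_of_int (c j)" unfolding \<sigma>'_def by auto
    next
      fix j assume "j \<in> {..<n} - \<sigma>'"
      then show "ycol d A y' j < real_of_int (c j)" using le[of j] unfolding \<sigma>'_def by force
    qed
    moreover have "\<sigma> \<subseteq> \<sigma>'" using ssub y0(2) w(2) ycy unfolding \<sigma>'_def by auto
    moreover have "js \<in> \<sigma>'"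
    proof -
      have "ycol d A w js > 0" using js(1) unfolding S_def by auto
      then have "t * ycol d A w js = real_of_int (c js) - ycol d A y0 js"
        using js(2) unfolding f_def by auto
      then show ?thesis using ycy js(1) unfolding \<sigma>'_def S_def by auto
    qed
    ultimately show False using mf Sns[OF js(1)] unfolding maximal_face_def by blast
  qed
  have uniq: "y1 = y0" if y1: "y1 \<in> rvecs d" "\<forall>j\<in>\<sigma>. ycol d A y1 j = real_of_int (c j)" for y1
  proof (rule ccontr)
    assume ne: "y1 \<noteq> y0"
    define w where "w = (\<lambda>i. y1 i - y0 i)"
    have wr: "w \<in> rvecs d" using y1(1) y0(1) unfolding rvecs_def w_def by auto
    have w0: "\<forall>j\<in>\<sigma>. ycol d A w j = 0" using y1(2) y0(2) unfolding w_def ycol_diff by auto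
    obtain i0 where i0: "w i0 \<noteq> 0" using ne unfolding w_def by (auto simp: fun_eq_iff)
    have i0d: "i0 < d" proof (rule ccontr) assume "\<not> i0 < d" then show False using wr i0 unfolding rvecs_def by auto qed
    obtain x where x: "x \<in> rvecs n" "w = mv d n (realA A) x" using rank wr unfolding rank_eq_rows_def by auto
    have "(\<Sum>i<d. w i * w i) = (\<Sum>i<d. w i * (\<Sum>j<n. real_of_int (A i j) * x j))"
    proof (rule sum.cong)
      fix i assume "i \<in> {..<d}"
      then have "w i = (\<Sum>j<n. real_of_int (A i j) * x j)" using x(2) by (simp add: mv_def realA_def)
      then show "w i * w i = w i * (\<Sum>j<n. real_of_int (A i j) * x j)" by simp
    qed simp
    also have "\<dots> = (\<Sum>i<d. \<Sum>j<n. w i * (real_of_int (A i j) * x j))"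
      by (simp add: sum_distrib_left)
    also have "\<dots> = (\<Sum>j<n. \<Sum>i<d. w i * (real_of_int (A i j) * x j))"
      by (rule sum.swap)
    also have "\<dots> = (\<Sum>j<n. x j * ycol d A w j)"
      unfolding ycol_def by (simp add: sum_distrib_left mult.commute mult.left_commute)
    finally have eq: "(\<Sum>i<d. w i * w i) = (\<Sum>j<n. x j * ycol d A w j)" .
    have "(\<Sum>i<d. w i * w i) > 0"
      by (rule sum_pos2[of _ i0]) (use i0 i0d in \<open>auto simp: not_square_less_zero zero_less_mult_iff\<close>)
    then obtain j where j: "j < n" "ycol d A w j \<noteq> 0"
    proof -
      have "\<not> (\<forall>j<n. ycol d A w j = 0)"
      proof
        assume "\<forall>j<n. ycol d A w j = 0"
        then have "(\<Sum>j<n. x j * ycol d A w j) = 0" by simp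
        then show False using eq \<open>(\<Sum>i<d. w i * w i) > 0\<close> by simp
      qed
      then show ?thesis using that by blast
    qed
    show False
    proof (cases "ycol d A w j > 0")
      case True then show ?thesis using no_up[OF wr w0 j(1)] by auto
    next
      case False
      then have "ycol d A (\<lambda>i. - w i) j > 0" using j(2) by (simp add: ycol_neg)
      moreover have "(\<lambda>i. - w i) \<in> rvecs d" using wr unfolding rvecs_def by auto
      moreover have "\<forall>j\<in>\<sigma>. ycol d A (\<lambda>i. - w i) j = 0" using w0 by (simp add: ycol_neg)
      ultimately show ?thesis using no_up j(1) by blast
    qed
  qed
  have "\<exists>!y. y \<in> rvecs d \<and> (\<forall>j\<in>\<sigma>. ycol d A y j = real_of_int (c j))"
    using y0 uniq by blast
  from theI'[OF this] show ?thesis unfolding ysig_def by blast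
qed



lemma Gobj_eq:
  assumes yc: "\<forall>j\<in>\<sigma>. ycol d A (ysig d A c \<sigma>) j = real_of_int (c j)" and ts: "\<tau> \<subseteq> \<sigma>"
  shows "G_obj d n A c \<sigma> \<tau> x = real_of_int (cdot n c x)
           - (\<Sum>i<d. ysig d A c \<sigma> i * real_of_int (mv d n A x i))"
proof -
  define y where "y = ysig d A c \<sigma>"
  have "G_obj d n A c \<sigma> \<tau> x = (\<Sum>j<n. ctilde d A c \<sigma> j * real_of_int (x j))"
    unfolding G_obj_def
    by (rule sum.mono_neutral_left) (use ts in \<open>auto simp: ctilde_def\<close>)
  also have "\<dots> = (\<Sum>j<n. (real_of_int (c j) - ycol d A y j) * real_of_int (x j))"
    by (rule sum.cong) (use yc in \<open>auto simp: ctilde_def y_def\<close>)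
  also have "\<dots> = (\<Sum>j<n. real_of_int (c j) * real_of_int (x j)) - (\<Sum>j<n. ycol d A y j * real_of_int (x j))"
    by (simp add: sum_subtractf algebra_simps)
  also have "(\<Sum>j<n. ycol d A y j * real_of_int (x j)) = (\<Sum>j<n. \<Sum>i<d. y i * (real_of_int (A i j) * real_of_int (x j)))"
    unfolding ycol_def by (simp add: sum_distrib_right mult.assoc)
  also have "\<dots> = (\<Sum>i<d. \<Sum>j<n. y i * (real_of_int (A i j) * real_of_int (x j)))"
    by (rule sum.swap)
  also have "\<dots> = (\<Sum>i<d. y i * real_of_int (mv d n A x i))"
    by (rule sum.cong) (auto simp: mv_def sum_distrib_left)
  finally show ?thesis unfolding y_def cdot_def by simp
qed

lemma mv_zvecs: "mv n p B z \<in> zvecs n"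
  unfolding mv_def zvecs_def by auto

lemma kernel:
  assumes B: "lattice_basis d n A B" and x: "x \<in> zvecs n" "x' \<in> zvecs n"
    and eq: "mv d n A x = mv d n A x'"
  shows "\<exists>z\<in>zvecs (n - d). \<forall>j. x' j = x j - mv n (n - d) B z j"
proof -
  have "(\<lambda>j. x j - x' j) \<in> zvecs n" using x unfolding zvecs_def by auto
  moreover have "mv d n A (\<lambda>j. x j - x' j) = (\<lambda>_. 0)" using eq by (simp add: mv_diff)
  ultimately obtain z where "z \<in> zvecs (n - d)" "(\<lambda>j. x j - x' j) = mv n (n - d) B z"
    using B unfolding lattice_basis_def by blast
  then show ?thesis
  proof (intro bexI[of _ z] allI)
    fix j assume "(\<lambda>j. x j - x' j) = mv n (n - d) B z"
    then have "x j - x' j = mv n (n - d) B z j" by (rule fun_cong)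
    then show "x' j = x j - mv n (n - d) B z j" by simp
  qed
qed

lemma shift:
  assumes B: "lattice_basis d n A B" and u: "u \<in> zvecs n" and z: "z \<in> zvecs (n - d)"
  shows "(\<lambda>j. u j - mv n (n - d) B z j) \<in> zvecs n"
    "mv d n A (\<lambda>j. u j - mv n (n - d) B z j) = mv d n A u"
    "cdot n c (\<lambda>j. u j - mv n (n - d) B z j) = cdot n c u - cdot n c (mv n (n - d) B z)"
proof -
  show "(\<lambda>j. u j - mv n (n - d) B z j) \<in> zvecs n" using u mv_zvecs[of n "n-d" B z] unfolding zvecs_def by auto
  have "mv d n A (mv n (n - d) B z) = (\<lambda>_. 0)" using B z unfolding lattice_basis_def by blast
  then show "mv d n A (\<lambda>j. u j - mv n (n - d) B z j) = mv d n A u" by (simp add: mv_diff)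
  show "cdot n c (\<lambda>j. u j - mv n (n - d) B z j) = cdot n c u - cdot n c (mv n (n - d) B z)"
    by (rule cdot_diff)
qed

lemma B_inj:
  assumes B: "lattice_basis d n A B" and z: "z \<in> zvecs (n - d)" and e: "\<forall>j. u j = u j - mv n (n - d) B z j"
  shows "z = (\<lambda>_. 0)"
proof -
  have "mv n (n - d) B z = (\<lambda>_. 0)" using e by (auto simp: fun_eq_iff)
  then show ?thesis using B z unfolding lattice_basis_def by blast
qed

lemma Qtau_mem:
  assumes z: "z \<in> zvecs (n - d)"
  shows "(\<lambda>k. real_of_int (z k)) \<in> Qtau d n c B \<tau> u \<longleftrightarrow>
     (\<forall>j\<in>{..<n} - \<tau>. mv n (n - d) B z j \<le> u j) \<and> 0 \<le> cdot n c (mv n (n - d) B z)"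
proof -
  have r: "(\<lambda>k. real_of_int (z k)) \<in> rvecs (n - d)" using z unfolding zvecs_def rvecs_def by auto
  have s: "(\<Sum>k<n - d. real_of_int (B j k) * real_of_int (z k)) = real_of_int (mv n (n - d) B z j)" if "j < n" for j
    using that by (simp add: mv_def)
  have t: "(\<Sum>j<n. real_of_int (c j) * (\<Sum>k<n - d. real_of_int (B j k) * real_of_int (z k)))
        = real_of_int (cdot n c (mv n (n - d) B z))"
    unfolding cdot_def by (simp add: s)
  show ?thesis unfolding Qtau_def using r s t by auto
qed

lemma zlat_int:
  assumes "zr \<in> zlat k"
  shows "(\<lambda>i. \<lfloor>zr i\<rfloor>) \<in> zvecs k" "zr = (\<lambda>i. real_of_int \<lfloor>zr i\<rfloor>)"
proof -
  have "\<forall>i. zr i \<in> \<int>" using assms unfolding zlat_def by auto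
  then have e: "real_of_int \<lfloor>zr i\<rfloor> = zr i" for i by (metis Ints_cases floor_of_int)
  show "zr = (\<lambda>i. real_of_int \<lfloor>zr i\<rfloor>)" by (rule ext) (simp only: e)
  show "(\<lambda>i. \<lfloor>zr i\<rfloor>) \<in> zvecs k" using assms unfolding zlat_def rvecs_def zvecs_def by auto
qed

lemma Qtau_char:
  assumes u: "u \<in> nvecs n"
  shows "Qtau d n c B \<tau> u \<inter> zlat (n - d) = {\<lambda>_. 0} \<longleftrightarrow>
    (\<forall>z\<in>zvecs (n - d). (\<forall>j\<in>{..<n} - \<tau>. mv n (n - d) B z j \<le> u j)
        \<and> 0 \<le> cdot n c (mv n (n - d) B z) \<longrightarrow> z = (\<lambda>_. 0))" (is "?L \<longleftrightarrow> ?R")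
proof
  assume L: ?L
  show ?R
  proof (intro ballI impI)
    fix z assume z: "z \<in> zvecs (n - d)" and h: "(\<forall>j\<in>{..<n} - \<tau>. mv n (n - d) B z j \<le> u j)
        \<and> 0 \<le> cdot n c (mv n (n - d) B z)"
    have "(\<lambda>k. real_of_int (z k)) \<in> Qtau d n c B \<tau> u" using Qtau_mem[OF z] h by blast
    moreover have "(\<lambda>k. real_of_int (z k)) \<in> zlat (n - d)" using z unfolding zvecs_def zlat_def rvecs_def by auto
    ultimately have "(\<lambda>k. real_of_int (z k)) = (\<lambda>_. 0)" using L by blast
    then show "z = (\<lambda>_. 0)" by (auto simp: fun_eq_iff)
  qed
next
  assume R: ?R
  have z0: "(\<lambda>_. 0::int) \<in> zvecs (n - d)" unfolding zvecs_def by auto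
  have "(\<lambda>k. real_of_int ((\<lambda>_. 0::int) k)) \<in> Qtau d n c B \<tau> u"
    using Qtau_mem[OF z0] u unfolding nvecs_def by (auto simp: mv_def cdot_def)
  moreover have "(\<lambda>_. 0::real) \<in> zlat (n - d)" unfolding zlat_def rvecs_def by auto
  ultimately have sup: "(\<lambda>_. 0::real) \<in> Qtau d n c B \<tau> u \<inter> zlat (n - d)" by simp
  have sub: "zr = (\<lambda>_. 0)" if zr: "zr \<in> Qtau d n c B \<tau> u \<inter> zlat (n - d)" for zr
  proof -
    define z where "z = (\<lambda>i. \<lfloor>zr i\<rfloor>)"
    have z: "z \<in> zvecs (n - d)" "zr = (\<lambda>i. real_of_int (z i))" using zlat_int[of zr] zr unfolding z_def by auto
    then have "z = (\<lambda>_. 0)" using R Qtau_mem[OF z(1)] zr by auto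
    then show ?thesis using z by auto
  qed
  show ?L using sup sub by blast
qed

lemma Q_Qtau: "Q d n c B u = Qtau d n c B {} u"
  unfolding Q_def Qtau_def by auto


lemma mvB0: "mv n p B (\<lambda>_. 0::int) = (\<lambda>_. 0)"
  by (simp add: mv_def fun_eq_iff)

theorem lemma2p9:
  fixes d n :: nat and A B :: "nat \<Rightarrow> nat \<Rightarrow> int" and c :: "nat \<Rightarrow> int"
  assumes rank: "rank_eq_rows d n A"
    and pointed: "pointed_cone (cone_cols d A {..<n})"
    and ker: "\<forall>x \<in> rvecs n. (\<forall>j<n. 0 \<le> x j) \<and> mv d n (realA A) x = (\<lambda>_. 0) \<longrightarrow> x = (\<lambda>_. 0)"
    and ZA: "mv d n A ` zvecs n = zvecs d"
    and gen: "generic d n A c"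
    and B: "lattice_basis d n A B"
  shows "(\<forall>u \<in> nvecs n. u \<in> Oc d n A c \<longleftrightarrow> Q d n c B u \<inter> zlat (n - d) = {\<lambda>_. 0})
       \<and> (\<forall>u \<in> Oc d n A c. \<forall>\<sigma> \<tau>. maximal_face (Delta d n A c) \<sigma> \<and> \<tau> \<subseteq> \<sigma> \<longrightarrow>
            (G_solves d n A c \<sigma> \<tau> (mv d n A u) \<longleftrightarrow> Qtau d n c B \<tau> u \<inter> zlat (n - d) = {\<lambda>_. 0}))"
proof -
  have Ge: "\<forall>b\<in>NA d n A. \<exists>!x. IP_opt d n A c b x" using gen unfolding generic_def by blast
  have NAu: "mv d n A u \<in> NA d n A" if "u \<in> nvecs n" for u using that unfolding NA_def by auto
  have nz: "u \<in> zvecs n" if "u \<in> nvecs n" for u using that unfolding nvecs_def by auto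
  have uniqIP: "x = u" if "u \<in> nvecs n" "IP_opt d n A c (mv d n A u) x" "IP_opt d n A c (mv d n A u) u" for u x
    using Ge NAu[OF that(1)] that(2,3) by blast
  have Oc_iff: "u \<in> Oc d n A c \<longleftrightarrow> u \<in> nvecs n \<and> IP_opt d n A c (mv d n A u) u" for u
    unfolding Oc_def IP_opt_def using NAu by auto
  have part1: "u \<in> Oc d n A c \<longleftrightarrow> Q d n c B u \<inter> zlat (n - d) = {\<lambda>_. 0}" if u: "u \<in> nvecs n" for u
  proof -
    have "Q d n c B u \<inter> zlat (n - d) = {\<lambda>_. 0} \<longleftrightarrow>
      (\<forall>z\<in>zvecs (n - d). (\<forall>j\<in>{..<n}. mv n (n - d) B z j \<le> u j)
        \<and> 0 \<le> cdot n c (mv n (n - d) B z) \<longrightarrow> z = (\<lambda>_. 0))"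
      unfolding Q_Qtau using Qtau_char[OF u, of d c B "{}"] by simp
    also have "\<dots> \<longleftrightarrow> IP_opt d n A c (mv d n A u) u"
    proof
      assume R: "\<forall>z\<in>zvecs (n - d). (\<forall>j\<in>{..<n}. mv n (n - d) B z j \<le> u j)
        \<and> 0 \<le> cdot n c (mv n (n - d) B z) \<longrightarrow> z = (\<lambda>_. 0)"
      obtain x0 where x0: "IP_opt d n A c (mv d n A u) x0" using Ge NAu[OF u] by blast
      then have x0n: "x0 \<in> nvecs n" and x0A: "mv d n A x0 = mv d n A u"
        and x0le: "cdot n c x0 \<le> cdot n c u" using u unfolding IP_opt_def by auto
      obtain z where z: "z \<in> zvecs (n - d)" "\<forall>j. x0 j = u j - mv n (n - d) B z j"
        using kernel[OF B nz[OF u] nz[OF x0n] x0A[symmetric]] by blast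
      have x0e: "x0 = (\<lambda>j. u j - mv n (n - d) B z j)" using z(2) by auto
      have "\<forall>j\<in>{..<n}. mv n (n - d) B z j \<le> u j"
        using x0n z(2) unfolding nvecs_def by force
      moreover have "0 \<le> cdot n c (mv n (n - d) B z)"
        using x0le shift(3)[OF B nz[OF u] z(1), of c] x0e by simp
      ultimately have "z = (\<lambda>_. 0)" using R z(1) by blast
      then have "x0 = u" using x0e by (simp add: mvB0)
      then show "IP_opt d n A c (mv d n A u) u" using x0 by simp
    next
      assume opt: "IP_opt d n A c (mv d n A u) u"
      show "\<forall>z\<in>zvecs (n - d). (\<forall>j\<in>{..<n}. mv n (n - d) B z j \<le> u j)
        \<and> 0 \<le> cdot n c (mv n (n - d) B z) \<longrightarrow> z = (\<lambda>_. 0)"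
      proof (intro ballI impI)
        fix z assume z: "z \<in> zvecs (n - d)" and h: "(\<forall>j\<in>{..<n}. mv n (n - d) B z j \<le> u j)
          \<and> 0 \<le> cdot n c (mv n (n - d) B z)"
        define x where "x = (\<lambda>j. u j - mv n (n - d) B z j)"
        have xz: "x \<in> zvecs n" "mv d n A x = mv d n A u"
          "cdot n c x = cdot n c u - cdot n c (mv n (n - d) B z)"
          using shift[OF B nz[OF u] z] unfolding x_def by auto
        have xn: "x \<in> nvecs n" using xz(1) h unfolding nvecs_def x_def by auto
        have "IP_opt d n A c (mv d n A u) x"
          unfolding IP_opt_def using xn xz h opt unfolding IP_opt_def by force
        then have "x = u" using uniqIP[OF u _ opt] by blast
        then show "z = (\<lambda>_. 0)" using B_inj[OF B z, of u] unfolding x_def by (metis)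
      qed
    qed
    finally show ?thesis using Oc_iff u by blast
  qed
  have part2: "G_solves d n A c \<sigma> \<tau> (mv d n A u) \<longleftrightarrow> Qtau d n c B \<tau> u \<inter> zlat (n - d) = {\<lambda>_. 0}"
    if uO: "u \<in> Oc d n A c" and mf: "maximal_face (Delta d n A c) \<sigma>" and ts: "\<tau> \<subseteq> \<sigma>" for u \<sigma> \<tau>
  proof -
    have u: "u \<in> nvecs n" and opt: "IP_opt d n A c (mv d n A u) u" using uO Oc_iff by auto
    define b where "b = mv d n A u"
    have yc: "\<forall>j\<in>\<sigma>. ycol d A (ysig d A c \<sigma>) j = real_of_int (c j)" by (rule ysig_prop[OF rank mf])
    have cmp: "G_obj d n A c \<sigma> \<tau> x \<le> G_obj d n A c \<sigma> \<tau> x' \<longleftrightarrow> cdot n c x \<le> cdot n c x'"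
      if "x \<in> G_feas d n A \<tau> b" "x' \<in> G_feas d n A \<tau> b" for x x'
      using that Gobj_eq[OF yc ts, of n x] Gobj_eq[OF yc ts, of n x'] unfolding G_feas_def by auto
    have Gopt: "G_opt d n A c \<sigma> \<tau> b x \<longleftrightarrow> x \<in> G_feas d n A \<tau> b \<and> (\<forall>x'\<in>G_feas d n A \<tau> b. cdot n c x \<le> cdot n c x')" for x
      unfolding G_opt_def using cmp by blast
    have uG: "u \<in> G_feas d n A \<tau> b" using u unfolding G_feas_def nvecs_def b_def by auto
    have "G_solves d n A c \<sigma> \<tau> b \<longleftrightarrow>
      (\<forall>z\<in>zvecs (n - d). (\<forall>j\<in>{..<n} - \<tau>. mv n (n - d) B z j \<le> u j)
        \<and> 0 \<le> cdot n c (mv n (n - d) B z) \<longrightarrow> z = (\<lambda>_. 0))"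
    proof
      assume GS: "G_solves d n A c \<sigma> \<tau> b"
      then obtain x0 where x0: "G_opt d n A c \<sigma> \<tau> b x0" and allnn: "\<And>x. G_opt d n A c \<sigma> \<tau> b x \<Longrightarrow> x \<in> nvecs n"
        unfolding G_solves_def by blast
      have x0n: "x0 \<in> nvecs n" using allnn[OF x0] .
      have x0f: "x0 \<in> G_feas d n A \<tau> b" and x0le: "\<forall>x'\<in>G_feas d n A \<tau> b. cdot n c x0 \<le> cdot n c x'"
        using x0 Gopt by auto
      have ux0: "cdot n c u \<le> cdot n c x0" using opt x0n x0f unfolding IP_opt_def G_feas_def b_def by auto
      show "\<forall>z\<in>zvecs (n - d). (\<forall>j\<in>{..<n} - \<tau>. mv n (n - d) B z j \<le> u j)
        \<and> 0 \<le> cdot n c (mv n (n - d) B z) \<longrightarrow> z = (\<lambda>_. 0)"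
      proof (intro ballI impI)
        fix z assume z: "z \<in> zvecs (n - d)" and h: "(\<forall>j\<in>{..<n} - \<tau>. mv n (n - d) B z j \<le> u j)
          \<and> 0 \<le> cdot n c (mv n (n - d) B z)"
        define x where "x = (\<lambda>j. u j - mv n (n - d) B z j)"
        have xz: "x \<in> zvecs n" "mv d n A x = mv d n A u"
          "cdot n c x = cdot n c u - cdot n c (mv n (n - d) B z)"
          using shift[OF B nz[OF u] z] unfolding x_def by auto
        have xf: "x \<in> G_feas d n A \<tau> b" using xz h unfolding G_feas_def b_def x_def by auto
        have "cdot n c x0 \<le> cdot n c x" using x0le xf by blast
        then have "G_opt d n A c \<sigma> \<tau> b x" using Gopt xf x0le xz(3) h ux0 by fastforce
        then have xn: "x \<in> nvecs n" by (rule allnn)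
        have "IP_opt d n A c (mv d n A u) x"
          using xn xz h opt unfolding IP_opt_def by force
        then have "x = u" using uniqIP[OF u _ opt] by blast
        then show "z = (\<lambda>_. 0)" using B_inj[OF B z, of u] unfolding x_def by (metis)
      qed
    next
      assume R: "\<forall>z\<in>zvecs (n - d). (\<forall>j\<in>{..<n} - \<tau>. mv n (n - d) B z j \<le> u j)
        \<and> 0 \<le> cdot n c (mv n (n - d) B z) \<longrightarrow> z = (\<lambda>_. 0)"
      have key: "x = u" if xf: "x \<in> G_feas d n A \<tau> b" and le: "cdot n c x \<le> cdot n c u" for x
      proof -
        have xz: "x \<in> zvecs n" "mv d n A x = mv d n A u" using xf unfolding G_feas_def b_def by auto
        obtain z where z: "z \<in> zvecs (n - d)" "\<forall>j. x j = u j - mv n (n - d) B z j"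
          using kernel[OF B nz[OF u] xz(1) xz(2)[symmetric]] by blast
        have xe: "x = (\<lambda>j. u j - mv n (n - d) B z j)" using z(2) by auto
        have "\<forall>j\<in>{..<n} - \<tau>. mv n (n - d) B z j \<le> u j"
          using xf z(2) unfolding G_feas_def by force
        moreover have "0 \<le> cdot n c (mv n (n - d) B z)"
          using le shift(3)[OF B nz[OF u] z(1), of c] xe by simp
        ultimately have "z = (\<lambda>_. 0)" using R z(1) by blast
        then show "x = u" using xe by (simp add: mvB0)
      qed
      have "G_opt d n A c \<sigma> \<tau> b u"
        unfolding Gopt using uG key by force
      moreover have "x \<in> nvecs n" if "G_opt d n A c \<sigma> \<tau> b x" for x
        using that uG key u unfolding Gopt by blast
      ultimately show "G_solves d n A c \<sigma> \<tau> b" unfolding G_solves_def by blast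
    qed
    then show ?thesis using Qtau_char[OF u, of d c B \<tau>] unfolding b_def by simp
  qed
  show ?thesis using part1 part2 by blast
qed

end
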